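(* For real $0\le x<\pi$ and every integer $r\ge2$, $$\log\mathcal C_r\left(\frac x{2\pi}\right)=\left(\frac x{2\pi}\right)^{r-1}\left(\log\left(\cos\frac x2\right)+(r-1)\sum_{n=1}^\infty\frac{\lambda(2n)}{n(2n+r-1)}\left(\frac x{\pi}\right)^{2n}\right).$$
   Context: For an integer $r\ge2$ let $P_r(y)=(1-y)\exp\left(y+\frac{y^2}{2}+\cdots+\frac{y^r}{r}\right)$. The multiple cosine function of Kurokawa–Koyama of order $r\ge2$ is $\mathcal C_r(x)=\prod_{n\ge1,\ n\text{ odd}}\left\{P_r\left(\frac{x}{n/2}\right)P_r\left(-\frac{x}{n/2}\right)^{(-1)^{r-1}}\right\}^{(n/2)^{r-1}}$, interpreted as $\mathcal C_r(x)=\exp\Big(\sum_{n\ge1,\,n\text{ odd}}(n/2)^{r-1}\big[\operatorname{Log}P_r(2x/n)+(-1)^{r-1}\operatorname{Log}P_r(-2x/n)\big]\Big)$, where $\operatorname{Log}P_r(y):=\operatorname{Log}(1-y)+y+\frac{y^2}{2}+\cdots+\frac{y^r}{r}$ with $\operatorname{Log}$ the principal branch. The series converges and defines a holomorphic function on $D=\mathbb C\setminus\big((-\infty,-\tfrac12]\cup[\tfrac12,\infty)\big)$, positive on $(-\tfrac12,\tfrac12)$; $\log\mathcal C_r(x)$ denotes the exponent above (the real logarithm for real $|x|<\tfrac12$). $\lambda(s)=\sum_{n=0}^\infty\frac1{(2n+1)^s}=(1-2^{-s})\zeta(s)$ is the Dirichlet lambda function. *)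

theory Defs
  imports "HOL-Analysis.Analysis"
begin

definition LogP :: "nat \<Rightarrow> complex \<Rightarrow> complex" where
  "LogP r y = Ln (1 - y) + (\<Sum>j=1..r. y ^ j / of_nat j)"

definition logC :: "nat \<Rightarrow> complex \<Rightarrow> complex" where
  "logC r x = (\<Sum>k. (of_nat (2*k+1) / 2) ^ (r - 1) *
       (LogP r (2 * x / of_nat (2*k+1)) + (-1) ^ (r - 1) * LogP r (- 2 * x / of_nat (2*k+1))))"

definition dirichlet_lambda :: "real \<Rightarrow> real" where
  "dirichlet_lambda s = (\<Sum>n. 1 / (real (2*n+1)) powr s)"

end

theory Submission imports Defs begin

lemma ln1m_series:
  fixes y :: real assumes "\<bar>y\<bar> < 1"
  shows "(\<lambda>n. - (y^n) / of_nat n) sums ln (1 - y)"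
  using ln_series'[of "-y"] assms by simp

lemma sign_lemma:
  assumes "1 \<le> r" shows "(-1::real)^(r-1) * (-1)^(r+1+2*n) = 1"
    and "(-1::real)^(r-1) * (-1)^(r+2+2*n) = -1"
proof -
  have "(r-1) + (r+1+2*n) = 2*(r+n)" using assms by simp
  hence "(-1::real)^(r-1) * (-1)^(r+1+2*n) = (-1)^(2*(r+n))" by (metis power_add)
  thus "(-1::real)^(r-1) * (-1)^(r+1+2*n) = 1" by simp
  have "(r-1) + (r+2+2*n) = 2*(r+n) + 1" using assms by simp
  hence "(-1::real)^(r-1) * (-1)^(r+2+2*n) = (-1)^(2*(r+n)+1)" by (metis power_add)
  thus "(-1::real)^(r-1) * (-1)^(r+2+2*n) = -1" by simp
qed

lemma aux_div: "-(a)/k - a/k = -2*a/(k::real)"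
  by (cases "k=0") (simp_all add: field_simps)

lemma aux2:
  fixes p q c :: real
  assumes "p > 0" "q > 0" "q = c + 2*p" shows "-1/p + c/(p*q) = -2/q"
proof -
  have "-1/p + c/(p*q) = (-q + c)/(p*q)" using assms(1,2) by (simp add: field_simps)
  also have "-q + c = -2*p" using assms(3) by simp
  also have "-2*p/(p*q) = -2/q" using assms by simp
  finally show ?thesis .
qed

lemma E_series:
  fixes u :: real and r :: nat
  assumes u: "\<bar>u\<bar> < 1" and r: "2 \<le> r"
  shows "(\<lambda>n. -2 * u^(r+1+2*n) / of_nat (r+1+2*n)) sums
     (ln (1-u) + (\<Sum>j=1..r. u^j / of_nat j) + (-1)^(r-1) * (ln (1+u) + (\<Sum>j=1..r. (-u)^j / of_nat j)))"
proof -
  define s where "s = ((-1::real)^(r-1))"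
  define d where "d j = -(u^j)/of_nat j + s * (-((-u)^j)/of_nat j)" for j
  have dL: "d sums (ln (1-u) + s * ln (1+u))"
    unfolding d_def using ln1m_series[of u] ln1m_series[of "-u"] u
    by (intro sums_add sums_mult) auto
  have d0: "d 0 = 0" by (simp add: d_def)
  have sumd: "(\<Sum>i<r+1. d i) = - (\<Sum>j=1..r. u^j / of_nat j) - s * (\<Sum>j=1..r. (-u)^j / of_nat j)"
  proof -
    have "{..<r+1} = insert 0 {1..r}" by auto
    hence "(\<Sum>i<r+1. d i) = (\<Sum>i=1..r. d i)" using d0 by simp
    also have "\<dots> = - (\<Sum>j=1..r. u^j / of_nat j) - s * (\<Sum>j=1..r. (-u)^j / of_nat j)"
      by (simp add: d_def sum_subtractf sum_distrib_left sum_negf)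
    finally show ?thesis .
  qed
  have "(\<lambda>i. d (i + (r+1))) sums (ln (1-u) + s * ln (1+u) - (\<Sum>i<r+1. d i))"
    using sums_iff_shift[of d "r+1" "ln (1-u) + s * ln (1+u) - (\<Sum>i<r+1. d i)"] dL by simp
  hence G: "(\<lambda>n. \<Sum>i\<in>{n*2..<n*2+2}. d (i + (r+1))) sums (ln (1-u) + s * ln (1+u) - (\<Sum>i<r+1. d i))"
    by (rule sums_group) simp
  have T: "(\<Sum>i\<in>{n*2..<n*2+2}. d (i + (r+1))) = -2 * u^(r+1+2*n) / of_nat (r+1+2*n)" for n
  proof -
    have "(\<Sum>i\<in>{n*2..<n*2+2}. d (i + (r+1))) = d (r+1+2*n) + d (r+2+2*n)"
      by (simp add: numeral_2_eq_2 add_ac mult_ac)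
    also have "d (r+1+2*n) = -2 * u^(r+1+2*n) / of_nat (r+1+2*n)"
    proof -
      have "s * (-u)^(r+1+2*n) = u^(r+1+2*n)"
      proof -
        have "s * (-u)^(r+1+2*n) = (s * (-1)^(r+1+2*n)) * u^(r+1+2*n)"
          by (simp only: power_minus[of u] mult.assoc)
        moreover have "s * (-1)^(r+1+2*n) = 1" using sign_lemma(1)[of r n] r unfolding s_def by simp
        ultimately show ?thesis by (metis mult_1_left mult_minus_left)
      qed
      hence "d (r+1+2*n) = -(u^(r+1+2*n))/of_nat (r+1+2*n) - u^(r+1+2*n)/of_nat (r+1+2*n)"
        unfolding d_def by (simp only: mult_minus_right minus_divide_left times_divide_eq_right diff_conv_add_uminus)
      thus ?thesis by (simp only: aux_div)
    qed
    also have "d (r+2+2*n) = 0"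
    proof -
      have "s * (-u)^(r+2+2*n) = -(u^(r+2+2*n))"
      proof -
        have "s * (-u)^(r+2+2*n) = (s * (-1)^(r+2+2*n)) * u^(r+2+2*n)"
          by (simp only: power_minus[of u] mult.assoc)
        moreover have "s * (-1)^(r+2+2*n) = -1" using sign_lemma(2)[of r n] r unfolding s_def by simp
        ultimately show ?thesis by (metis mult_1_left mult_minus_left)
      qed
      hence "d (r+2+2*n) = -(u^(r+2+2*n))/of_nat (r+2+2*n) - (-(u^(r+2+2*n)))/of_nat (r+2+2*n)"
        unfolding d_def by (simp only: mult_minus_right minus_divide_left times_divide_eq_right diff_conv_add_uminus)
      thus ?thesis by simp
    qed
    finally show ?thesis by simp
  qed
  have "(\<lambda>n. -2 * u^(r+1+2*n) / of_nat (r+1+2*n)) sums (ln (1-u) + s * ln (1+u) - (\<Sum>i<r+1. d i))"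
    using G by (simp only: T)
  moreover have "ln (1-u) + s * ln (1+u) - (\<Sum>i<r+1. d i) =
     (ln (1-u) + (\<Sum>j=1..r. u^j / of_nat j) + s * (ln (1+u) + (\<Sum>j=1..r. (-u)^j / of_nat j)))"
    by (simp only: sumd) (simp add: algebra_simps)
  ultimately show ?thesis unfolding s_def by (simp only:)
qed

lemma double_sums_swap:
  fixes f :: "nat \<Rightarrow> nat \<Rightarrow> real"
  assumes nonneg: "\<And>k m. f k m \<ge> 0"
    and inner1: "\<And>k. f k sums B k" and sB: "summable B"
    and inner2: "\<And>m. (\<lambda>k. f k m) sums G m"
  shows "G sums (suminf B)"
proof -
  define h where "h = (\<lambda>(k,m). f k m)"
  have h1: "((\<lambda>m. h (k, m)) has_sum B k) UNIV" for k
    unfolding h_def using inner1 nonneg by (simp add: sums_nonneg_imp_has_sum)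
  have Bnn: "B k \<ge> 0" for k using inner1[of k] nonneg by (metis sums_iff suminf_nonneg)
  have Bhs: "(B has_sum suminf B) UNIV"
    using sB Bnn by (simp add: summable_sums sums_nonneg_imp_has_sum)
  have "h summable_on (UNIV \<times> UNIV)"
    using summable_on_SigmaI[where A=UNIV and B="\<lambda>_. UNIV" and f=h and g=B] h1 Bhs nonneg
    by (auto simp: h_def summable_on_def)
  then obtain S where S: "(h has_sum S) (UNIV \<times> UNIV)" by (auto simp: summable_on_def)
  have "(B has_sum S) UNIV" using has_sum_SigmaD[OF S] h1 by blast
  hence SB: "S = suminf B" using Bhs has_sum_unique by blast
  have S': "((\<lambda>(x,y). h (y,x)) has_sum S) (UNIV \<times> UNIV)" using S has_sum_swap by blast
  have h2: "((\<lambda>k. (\<lambda>(x,y). h (y,x)) (m, k)) has_sum G m) UNIV" for m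
    unfolding h_def using inner2 nonneg by (simp add: sums_nonneg_imp_has_sum)
  have "(G has_sum S) UNIV" using has_sum_SigmaD[OF S'] h2 by blast
  thus ?thesis using SB has_sum_imp_sums by blast
qed

lemma u_bounds:
  fixes w :: real assumes "0 \<le> w" "w < 1"
  shows "0 \<le> w / real (2*k+1)" "w / real (2*k+1) < 1" "(w / real (2*k+1))^2 < 1"
proof -
  show a: "0 \<le> w / real (2*k+1)" using assms by simp
  have "w / real (2*k+1) \<le> w" using assms by (simp add: divide_le_eq mult_le_cancel_left1)
  thus b: "w / real (2*k+1) < 1" using assms by simp
  show "(w / real (2*k+1))^2 < 1" using power_strict_mono[OF b a, of 2] by simp
qed

lemma cos_log_sums:
  fixes w :: real assumes w0: "0 \<le> w" and w1: "w < 1"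
  shows "(\<lambda>k. ln (1 - (w / real (2*k+1))^2)) sums ln (cos (pi*w/2))"
proof (cases "w = 0")
  case True thus ?thesis by simp
next
  case False
  hence wpos: "w > 0" using w0 by simp
  define P where "P z n = (\<Prod>k=1..n. 1 - z^2/of_nat k^2)" for z :: real and n
  define Q where "Q n = (\<Prod>k<n. 1 - (w / real (2*k+1))^2)" for n
  have PQ: "P w (2*n) = P (w/2) n * Q n" for n
  proof (induction n)
    case 0 thus ?case by (simp add: P_def Q_def)
  next
    case (Suc n)
    have "P w (2 * Suc n) = P w (2*n) * (1 - (w / real (2*n+1))^2) * (1 - w^2/of_nat (2*n+2)^2)"
      by (simp add: P_def prod.cl_ivl_Suc power_divide)
    also have "(1 - w^2/of_nat (2*n+2)^2) = 1 - (w/2)^2 / of_nat (Suc n)^2"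
      by (simp add: power_divide power_mult_distrib field_simps power2_eq_square)
    also have "P w (2*n) * (1 - (w / real (2*n+1))^2) * (1 - (w/2)^2 / of_nat (Suc n)^2)
       = (P (w/2) n * (1 - (w/2)^2 / of_nat (Suc n)^2)) * (Q n * (1 - (w / real (2*n+1))^2))"
      using Suc by (simp add: mult_ac)
    also have "\<dots> = P (w/2) (Suc n) * Q (Suc n)"
      by (simp add: P_def Q_def prod.cl_ivl_Suc)
    finally show ?case .
  qed
  have Pnz: "P (w/2) n > 0" for n
    unfolding P_def
  proof (intro prod_pos)
    fix k assume k: "k \<in> {1..n}"
    have "(w/2)^2 < 1" using wpos w1 by (simp add: power_less_one_iff abs_square_less_1)
    also have "1 \<le> (of_nat k::real)^2" using k by (intro one_le_power) auto
    finally show "0 < 1 - (w/2)^2 / of_nat k^2" using k by simp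
  qed
  have L1: "(\<lambda>n. P w (2*n)) \<longlonglongrightarrow> sin (pi * w) / (pi * w)"
  proof -
    have "(\<lambda>n. P w n) \<longlonglongrightarrow> sin (pi * w) / (pi * w)"
      unfolding P_def using sin_product_formula_real'[of w] wpos by simp
    moreover have "strict_mono (\<lambda>n::nat. 2*n)" by (simp add: strict_mono_def)
    ultimately show ?thesis using LIMSEQ_subseq_LIMSEQ[where f="\<lambda>n. 2*n"] by (simp add: o_def)
  qed
  have L2: "(\<lambda>n. P (w/2) n) \<longlonglongrightarrow> sin (pi * (w/2)) / (pi * (w/2))"
    unfolding P_def using sin_product_formula_real'[of "w/2"] wpos by simp
  have sinpos: "sin (pi * (w/2)) > 0" using wpos w1 by (intro sin_gt_zero) auto
  have cospos: "cos (pi*w/2) > 0"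
  proof (intro cos_gt_zero_pi)
    have "0 < pi * w" using wpos by simp
    thus "- (pi/2) < pi*w/2" using pi_gt_zero by linarith
    have "pi * w < pi * 1" using w1 by (intro mult_strict_left_mono) auto
    thus "pi*w/2 < pi/2" by simp
  qed
  have "(\<lambda>n. P w (2*n) / P (w/2) n) \<longlonglongrightarrow> (sin (pi * w) / (pi * w)) / (sin (pi * (w/2)) / (pi * (w/2)))"
    using L1 L2 sinpos wpos by (intro tendsto_divide) auto
  also have "(sin (pi * w) / (pi * w)) / (sin (pi * (w/2)) / (pi * (w/2))) = cos (pi*w/2)"
  proof -
    have "sin (pi * w) = 2 * sin (pi*(w/2)) * cos (pi*w/2)"
      using sin_double[of "pi*(w/2)"] by (simp add: mult_ac)
    thus ?thesis using sinpos wpos by (simp add: field_simps)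
  qed
  also have "(\<lambda>n. P w (2*n) / P (w/2) n) = Q"
    using PQ Pnz by (auto simp: fun_eq_iff) (metis less_irrefl nonzero_mult_div_cancel_left)
  finally have "Q \<longlonglongrightarrow> cos (pi*w/2)" .
  hence "(\<lambda>n. ln (Q n)) \<longlonglongrightarrow> ln (cos (pi*w/2))" using cospos by (intro tendsto_ln) auto
  moreover have "ln (Q n) = (\<Sum>k<n. ln (1 - (w / real (2*k+1))^2))" for n
    unfolding Q_def using u_bounds(3)[OF w0 w1] by (intro ln_prod) (auto simp: less_le)
  ultimately show ?thesis unfolding sums_def by simp
qed

lemma LogP_real:
  assumes "y < 1"
  shows "LogP r (complex_of_real y) = of_real (ln (1-y) + (\<Sum>j=1..r. y^j / of_nat j))"
proof -
  have "Ln (1 - complex_of_real y) = of_real (ln (1-y))"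
    using Ln_of_real[of "1-y"] assms by simp
  thus ?thesis unfolding LogP_def by simp
qed

lemma lambda_summable:
  assumes "2 \<le> p"
  shows "summable (\<lambda>k. 1 / real (2*k+1) powr real p)"
proof (rule summable_comparison_test')
  show "summable (\<lambda>k. 1 / (real k + 1)^2)"
    using inverse_squares_sums by (simp add: sums_iff add.commute)
  fix k :: nat
  have "real (2*k+1) powr real p = real (2*k+1) ^ p" by (simp add: powr_realpow)
  also have "\<dots> \<ge> real (2*k+1) ^ 2"
    using assms by (intro power_increasing) auto
  also have "real (2*k+1) ^ 2 \<ge> (real k + 1)^2"
    by (intro power_mono) auto
  finally have "(real k + 1)^2 \<le> real (2*k+1) powr real p" .
  moreover have "(real k + 1)^2 > 0" by simp
  ultimately show "norm (1 / real (2*k+1) powr real p) \<le> 1 / (real k + 1)^2"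
    by (simp add: frac_le)
qed

theorem theorem2p8:
  fixes x :: real and r :: nat
  assumes "0 \<le> x" and "x < pi" and "2 \<le> r"
  shows "logC r (complex_of_real (x / (2*pi))) =
    complex_of_real ((x / (2*pi)) ^ (r - 1) *
      (ln (cos (x / 2)) + real (r - 1) *
        (\<Sum>m. dirichlet_lambda (real (2 * (m+1))) / (real (m+1) * real (2*(m+1) + r - 1))
               * (x / pi) ^ (2 * (m+1)))))"
proof -
  note r = assms(3)
  define w where "w = x / pi"
  define t where "t = x / (2*pi)"
  have w0: "0 \<le> w" using assms unfolding w_def by simp
  have w1: "w < 1" using assms unfolding w_def by (simp add: divide_less_eq)
  have tw: "t = w / 2" unfolding t_def w_def by simp
  define u where "u k = w / real (2*k+1)" for k
  define a where "a k = real (2*k+1) / 2" for k :: nat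
  have u0: "0 \<le> u k" and u1: "u k < 1" and u2: "(u k)^2 < 1" for k
    unfolding u_def using u_bounds[OF w0 w1] by auto
  have au: "a k * u k = t" for k unfolding a_def u_def tw by (simp add: field_simps)
  define E where "E v = ln (1-v) + (\<Sum>j=1..r. v^j / of_nat j) + (-1)^(r-1) * (ln (1+v) + (\<Sum>j=1..r. (-v)^j / of_nat j))" for v :: real
  define T where "T k = a k ^ (r-1) * E (u k)" for k
  have summand: "(of_nat (2*k+1) / 2) ^ (r - 1) *
       (LogP r (2 * complex_of_real t / of_nat (2*k+1)) + (-1) ^ (r - 1) * LogP r (- 2 * complex_of_real t / of_nat (2*k+1)))
       = complex_of_real (T k)" for k
  proof -
    have e1: "2 * complex_of_real t / of_nat (2*k+1) = of_real (u k)"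
      unfolding u_def tw by simp
    have e2: "- 2 * complex_of_real t / of_nat (2*k+1) = of_real (- u k)"
      unfolding u_def tw by simp
    have e3: "(of_nat (2*k+1) / 2 :: complex) ^ (r - 1) = of_real (a k ^ (r-1))"
      unfolding a_def by simp
    have m1: "- u k < 1" using u0[of k] by linarith
    show ?thesis unfolding e1 e2 e3 LogP_real[OF u1] LogP_real[OF m1] T_def E_def
      by simp
  qed
  have Tser: "(\<lambda>n. -2 * t^(r-1) * u k^(2*(n+1)) / real (r+1+2*n)) sums T k" for k
  proof -
    have "\<bar>u k\<bar> < 1" using u0 u1 by simp
    from sums_mult[OF E_series[OF this r], of "a k ^ (r-1)"]
    have H: "(\<lambda>n. a k ^ (r-1) * (-2 * u k^(r+1+2*n) / of_nat (r+1+2*n))) sums T k"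
      unfolding T_def E_def .
    have eqf: "(\<lambda>n. a k ^ (r-1) * (-2 * u k^(r+1+2*n) / of_nat (r+1+2*n))) = (\<lambda>n. -2 * t^(r-1) * u k^(2*(n+1)) / real (r+1+2*n))"
    proof (rule ext)
      fix n
      have "r+1+2*n = (r-1) + 2*(n+1)" using r by simp
      hence "u k^(r+1+2*n) = u k^(r-1) * u k^(2*(n+1))"
        by (metis power_add)
      hence "a k ^ (r-1) * u k^(r+1+2*n) = (a k * u k)^(r-1) * u k^(2*(n+1))"
        by (simp add: power_mult_distrib)
      thus "a k ^ (r-1) * (-2 * u k^(r+1+2*n) / of_nat (r+1+2*n)) = -2 * t^(r-1) * u k^(2*(n+1)) / real (r+1+2*n)" unfolding au by simp
    qed
    show ?thesis using H unfolding eqf .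
  qed
  have lser: "(\<lambda>m. - (u k^(2*(m+1))) / real (m+1)) sums ln (1 - (u k)^2)" for k
  proof -
    have "\<bar>(u k)^2\<bar> < 1" using u2 by simp
    from ln1m_series[OF this] have "(\<lambda>n. - (((u k)^2)^n) / of_nat n) sums ln (1 - (u k)^2)" .
    hence "(\<lambda>n. - (((u k)^2)^(Suc n)) / of_nat (Suc n)) sums ln (1 - (u k)^2)"
      by (subst sums_Suc_iff) simp
    thus ?thesis by (simp only: power_mult Suc_eq_plus1)
  qed
  define f where "f k m = u k^(2*(m+1)) / (real (m+1) * real (2*(m+1) + r - 1))" for k m
  have fnn: "f k m \<ge> 0" for k m unfolding f_def using u0 by simp
  have fle: "f k m \<le> u k^(2*(m+1)) / real (m+1)" for k m
    unfolding f_def using u0 r by (simp add: frac_le)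
  have fsum: "summable (f k)" for k
    by (rule summable_comparison_test'[where g="\<lambda>m. u k^(2*(m+1)) / real (m+1)" and N=0])
       (use lser[of k] fnn fle in \<open>auto simp: sums_iff summable_minus_iff\<close>)
  define B where "B k = suminf (f k)" for k
  have fB: "f k sums B k" for k unfolding B_def using fsum summable_sums by blast
  have lser': "(\<lambda>m. u k^(2*(m+1)) / real (m+1)) sums (- ln (1 - (u k)^2))" for k
    using sums_minus[OF lser[of k]] by simp
  have Ble: "B k \<le> - ln (1 - (u k)^2)" for k
    by (rule sums_le[OF _ fB lser']) (rule fle)
  have cs: "(\<lambda>k. ln (1 - (u k)^2)) sums ln (cos (x/2))"
  proof -
    have "pi * w / 2 = x / 2" unfolding w_def by simp
    thus ?thesis using cos_log_sums[OF w0 w1] unfolding u_def by simp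
  qed
  have Bnn: "0 \<le> B k" for k unfolding B_def using fsum fnn by (simp add: suminf_nonneg)
  have Bsum: "summable B"
    by (rule summable_comparison_test'[where g="\<lambda>k. - ln (1 - (u k)^2)" and N=0])
       (use cs Ble Bnn in \<open>auto simp: sums_iff summable_minus_iff\<close>)
  have TB: "T k = t^(r-1) * (ln (1 - (u k)^2) + real (r-1) * B k)" for k
  proof -
    have H: "(\<lambda>m. t^(r-1) * (- (u k^(2*(m+1))) / real (m+1) + real (r-1) * f k m)) sums (t^(r-1) * (ln (1 - (u k)^2) + real (r-1) * B k))"
      by (intro sums_mult sums_add lser fB)
    have eqf: "(\<lambda>m. t^(r-1) * (- (u k^(2*(m+1))) / real (m+1) + real (r-1) * f k m)) = (\<lambda>m. -2 * t^(r-1) * u k^(2*(m+1)) / real (r+1+2*m))"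
    proof (rule ext)
      fix m
      have rr: "real (2*(m+1) + r - 1) = real (r+1+2*m)" using r by simp
      have rr2: "real (r-1) = real r - 1" using r by simp
      have key: "- 1 / real (m+1) + real (r-1) / (real (m+1) * real (2*(m+1) + r - 1)) = -2 / real (r+1+2*m)"
        unfolding rr rr2 by (rule aux2) auto
      define U where "U = u k^(2*(m+1))"
      have "t^(r-1) * (- U / real (m+1) + real (r-1) * (U / (real (m+1) * real (2*(m+1) + r - 1))))
          = t^(r-1) * U * (- 1 / real (m+1) + real (r-1) / (real (m+1) * real (2*(m+1) + r - 1)))"
        by (simp add: algebra_simps)
      also have "\<dots> = t^(r-1) * U * (-2 / real (r+1+2*m))" unfolding key ..
      also have "\<dots> = -2 * t^(r-1) * U / real (r+1+2*m)" by simp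
      finally show "t^(r-1) * (- (u k^(2*(m+1))) / real (m+1) + real (r-1) * f k m) = -2 * t^(r-1) * u k^(2*(m+1)) / real (r+1+2*m)"
        unfolding f_def U_def .
    qed
    have "(\<lambda>m. -2 * t^(r-1) * u k^(2*(m+1)) / real (r+1+2*m)) sums (t^(r-1) * (ln (1 - (u k)^2) + real (r-1) * B k))"
      using H unfolding eqf .
    thus ?thesis using Tser[of k] sums_unique2 by blast
  qed
  define G where "G m = dirichlet_lambda (real (2 * (m+1))) / (real (m+1) * real (2*(m+1) + r - 1)) * (x / pi) ^ (2 * (m+1))" for m
  have fG: "(\<lambda>k. f k m) sums G m" for m
  proof -
    have ls: "(\<lambda>k. 1 / real (2*k+1) powr real (2*(m+1))) sums dirichlet_lambda (real (2 * (m+1)))"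
      unfolding dirichlet_lambda_def using lambda_summable[of "2*(m+1)"] by (simp add: summable_sums)
    have "(\<lambda>k. w ^ (2 * (m+1)) / (real (m+1) * real (2*(m+1) + r - 1)) * (1 / real (2*k+1) powr real (2*(m+1))))
       sums (w ^ (2 * (m+1)) / (real (m+1) * real (2*(m+1) + r - 1)) * dirichlet_lambda (real (2 * (m+1))))"
      by (intro sums_mult ls)
    moreover have "w ^ (2 * (m+1)) / (real (m+1) * real (2*(m+1) + r - 1)) * (1 / real (2*k+1) powr real (2*(m+1))) = f k m" for k
    proof -
      have "real (2*k+1) powr real (2*(m+1)) = real (2*k+1) ^ (2*(m+1))"
        by (intro powr_realpow) simp
      thus ?thesis unfolding f_def u_def by (simp add: power_divide)
    qed
    ultimately show ?thesis unfolding G_def w_def by (simp add: mult_ac)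
  qed
  have GB: "G sums suminf B" by (rule double_sums_swap[OF fnn fB Bsum fG])
  have Tsum: "T sums (t^(r-1) * (ln (cos (x/2)) + real (r-1) * suminf B))"
    unfolding TB by (intro sums_mult sums_add cs Bsum[THEN summable_sums])
  have "logC r (complex_of_real t) = (\<Sum>k. complex_of_real (T k))"
    unfolding logC_def summand ..
  also have "\<dots> = complex_of_real (t^(r-1) * (ln (cos (x/2)) + real (r-1) * suminf B))"
    using sums_of_real[OF Tsum] by (rule sums_unique[symmetric])
  also have "suminf B = suminf G" using GB sums_unique by blast
  finally show ?thesis unfolding t_def G_def .
qed

end
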